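(* Let $d\ge1$, $\sigma>0$, and let $V,W:\mathbb{R}^d\to\mathbb{R}$ satisfy the hypotheses (H) stated in the context. Let $x_0\in\mathbb{R}^d$ and let $(X_t)_{t\ge0}$ solve $$\mathrm{d}X_t=\sigma\,\mathrm{d}B_t-\Big(\nabla V(X_t)+\frac1t\int_0^t\nabla W(X_t-X_s)\,\mathrm{d}s\Big)\mathrm{d}t,\qquad X_0=x_0,$$ with $B$ a standard $d$-dimensional Brownian motion. Let $(\psi_t(x_0))_{t\ge0}$ be the deterministic path solving $$\dot\psi_t=-\nabla V(\psi_t)-\frac1t\int_0^t\nabla W(\psi_t-\psi_s)\,\mathrm{d}s,\qquad \psi_0=x_0.$$ Then for every $\xi>0$ and every $T>0$, $$\lim_{\sigma\to0}\mathbb{P}\Big(\sup_{t\in[0,T]}|X_t-\psi_t(x_0)|^2>\xi\Big)=0.$$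
   Context: Hypotheses (H): (i) $V,W\in\mathcal{C}^2(\mathbb{R}^d)$, $V\ge0$, $W\ge0$. (ii) There is a polynomial $P$ with $P(|x|)\ge1$ such that for all $x$, $|W(x)|+|\nabla W(x)|+\|\nabla^2W(x)\|+|V(x)|+|\nabla V(x)|+\|\nabla^2V(x)\|\le P(|x|)$; moreover $\nabla^2V\ge\rho>0$ and $\nabla^2W\ge\alpha>0$ everywhere, $\Delta V(x)\le aV(x)$ for some constant $a$, and $|\nabla V(x)|^2/V(x)\to\infty$ as $|x|\to\infty$. (iii) $V$ has a unique minimum at a point $m$. (iv) $W(x)=G(|x|)$ for some $G:\mathbb{R}_+\to\mathbb{R}$. *)

theory Defs
  imports "HOL-Probability.Probability" "HOL-Computational_Algebra.Polynomial"
begin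

definition std_brownian_motion :: "'a measure \<Rightarrow> (real \<Rightarrow> 'a \<Rightarrow> real^'n) \<Rightarrow> bool" where
  "std_brownian_motion M B \<longleftrightarrow>
     prob_space M \<and>
     (\<forall>t\<ge>0. B t \<in> borel_measurable M) \<and>
     (AE \<omega> in M. B 0 \<omega> = 0 \<and> continuous_on {0..} (\<lambda>t. B t \<omega>)) \<and>
     (\<forall>(ts :: nat \<Rightarrow> real) n. 0 \<le> ts 0 \<and> (\<forall>i<n. ts i \<le> ts (Suc i)) \<longrightarrow>
        prob_space.indep_vars M (\<lambda>_. borel) (\<lambda>i \<omega>. B (ts (Suc i)) \<omega> - B (ts i) \<omega>) {..<n}) \<and>
     (\<forall>s t. 0 \<le> s \<and> s < t \<longrightarrow>
        distributed M lborel (\<lambda>\<omega>. B t \<omega> - B s \<omega>)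
          (\<lambda>x. ennreal (\<Prod>i\<in>UNIV. normal_density 0 (sqrt (t - s)) (x $ i))))"

text \<open>Integral form of  dx_t = db_t - (gV(x_t) + (1/t) int_0^t gW(x_t - x_s) ds) dt, x_0 = x0,
  driven by a continuous path b with b 0 = 0.\<close>
definition self_interacting_path ::
  "(real^'n \<Rightarrow> real^'n) \<Rightarrow> (real^'n \<Rightarrow> real^'n) \<Rightarrow> real^'n \<Rightarrow> (real \<Rightarrow> real^'n)
     \<Rightarrow> (real \<Rightarrow> real^'n) \<Rightarrow> bool" where
  "self_interacting_path gV gW x0 b x \<longleftrightarrow>
     continuous_on {0..} x \<and>
     (\<forall>t\<ge>0. x t = x0 + b t -
        integral {0..t} (\<lambda>s. gV (x s) + (1 / s) *\<^sub>R integral {0..s} (\<lambda>u. gW (x s - x u))))"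

text \<open>Outer probability (equals prob on measurable events; avoids measurability side issues).\<close>
definition outer_prob :: "'a measure \<Rightarrow> 'a set \<Rightarrow> real" where
  "outer_prob M A = Inf {measure M N | N. N \<in> sets M \<and> A \<inter> space M \<subseteq> N}"

end

theory Submission imports Defs begin

definition Fp :: "(real^'n \<Rightarrow> real^'n) \<Rightarrow> (real^'n \<Rightarrow> real^'n) \<Rightarrow> (real \<Rightarrow> real^'n) \<Rightarrow> real \<Rightarrow> real^'n" where
  "Fp g w x s = g (x s) + (1 / s) *\<^sub>R integral {0..s} (\<lambda>u. w (x s - x u))"

lemma inner_cont:
  fixes w :: "real^'n \<Rightarrow> real^'n" and x :: "real \<Rightarrow> real^'n"
  assumes cw: "continuous_on UNIV w" and cx: "continuous_on {0..} x" and t: "t \<ge> 0"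
  shows "continuous_on {0..t} (\<lambda>s. integral {0..s} (\<lambda>u. w (x s - x u)))"
proof -
  define J where "J s = integral {0..t} (\<lambda>u. w (x s - x (min u s)))" for s
  have cj: "continuous_on ({0..t} \<times> {0..t}) (\<lambda>(s, u). w (x s - x (min u s)))"
  proof -
    have c1: "continuous_on ({0..t} \<times> {0..t}) (\<lambda>p. x (fst p))"
      by (rule continuous_on_compose2[OF cx]) (auto intro!: continuous_intros)
    have c2: "continuous_on ({0..t} \<times> {0..t}) (\<lambda>p. x (min (snd p) (fst p)))"
      by (rule continuous_on_compose2[OF cx]) (auto intro!: continuous_intros)
    have "continuous_on ({0..t} \<times> {0..t}) (\<lambda>p. w (x (fst p) - x (min (snd p) (fst p))))"
      by (rule continuous_on_compose2[OF cw]) (auto intro!: continuous_intros c1 c2)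
    then show ?thesis by (simp add: case_prod_beta)
  qed
  have "continuous_on {0..t} J"
    unfolding J_def using integral_continuous_on_param[of "{0..t}" 0 t "\<lambda>s u. w (x s - x (min u s))"] cj by (simp add: cbox_interval)
  then have cJ: "continuous_on {0..t} (\<lambda>s. J s - (t - s) *\<^sub>R w 0)"
    by (auto intro!: continuous_intros)
  show ?thesis
  proof (rule continuous_on_eq[OF cJ])
    fix s assume s: "s \<in> {0..t}"
    have ci: "continuous_on {0..t} (\<lambda>u. w (x s - x (min u s)))"
      by (rule continuous_on_compose2[OF cw]) (use s in \<open>auto intro!: continuous_intros continuous_on_compose2[OF cx]\<close>)
    have "J s = integral {0..s} (\<lambda>u. w (x s - x (min u s))) + integral {s..t} (\<lambda>u. w (x s - x (min u s)))"
      unfolding J_def using s by (intro Henstock_Kurzweil_Integration.integral_combine[symmetric] integrable_continuous_interval ci) auto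
    also have "integral {0..s} (\<lambda>u. w (x s - x (min u s))) = integral {0..s} (\<lambda>u. w (x s - x u))"
      by (rule integral_cong) auto
    also have "integral {s..t} (\<lambda>u. w (x s - x (min u s))) = integral {s..t} (\<lambda>u. w 0)"
      by (rule integral_cong) auto
    also have "\<dots> = (t - s) *\<^sub>R w 0" using s by simp
    finally show "J s - (t - s) *\<^sub>R w 0 = integral {0..s} (\<lambda>u. w (x s - x u))" by simp
  qed
qed

lemma bound_on_compact:
  fixes f :: "'a::metric_space \<Rightarrow> 'b::real_normed_vector"
  assumes "continuous_on S f" "compact S"
  shows "\<exists>B. \<forall>s\<in>S. norm (f s) \<le> B"
proof -
  have "bounded (f ` S)" using assms compact_continuous_image compact_imp_bounded by blast
  then show ?thesis by (auto simp: bounded_iff)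
qed

lemma Fp_integrable:
  fixes g w :: "real^'n \<Rightarrow> real^'n" and x :: "real \<Rightarrow> real^'n"
  assumes cg: "continuous_on UNIV g" and cw: "continuous_on UNIV w" and cx: "continuous_on {0..} x" and t: "t \<ge> 0"
  shows "Fp g w x integrable_on {0..t}"
proof -
  have cxt: "continuous_on {0..t} x" using cx by (rule continuous_on_subset) auto
  obtain R where R: "\<And>s. s \<in> {0..t} \<Longrightarrow> norm (x s) \<le> R"
    using bound_on_compact[OF cxt compact_Icc] by blast
  obtain Bw where Bw: "\<And>y. y \<in> cball 0 (2*R) \<Longrightarrow> norm (w y) \<le> Bw"
    using bound_on_compact[OF continuous_on_subset[OF cw] compact_cball[of 0 "2*R"]] by blast
  obtain Bg where Bg: "\<And>y. y \<in> cball 0 R \<Longrightarrow> norm (g y) \<le> Bg"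
    using bound_on_compact[OF continuous_on_subset[OF cg] compact_cball[of 0 R]] by blast
  have bnd: "norm (Fp g w x s) \<le> Bg + Bw" if s: "s \<in> {0<..t}" for s
  proof -
    have ci: "continuous_on {0..s} (\<lambda>u. w (x s - x u))"
      by (rule continuous_on_compose2[OF cw]) (use s in \<open>auto intro!: continuous_intros continuous_on_subset[OF cx]\<close>)
    have "norm (integral {0..s} (\<lambda>u. w (x s - x u))) \<le> Bw * (s - 0)"
    proof (rule integral_bound)
      fix u assume u: "u \<in> {0..s}"
      have "norm (x s - x u) \<le> norm (x s) + norm (x u)" by (rule norm_triangle_ineq4)
      also have "\<dots> \<le> 2 * R" using R[of s] R[of u] u s by auto
      finally show "norm (w (x s - x u)) \<le> Bw" by (intro Bw) auto
    qed (use s ci in auto)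
    then have "norm ((1 / s) *\<^sub>R integral {0..s} (\<lambda>u. w (x s - x u))) \<le> Bw"
      using s by (simp add: field_simps)
    moreover have "norm (g (x s)) \<le> Bg" using Bg R[of s] s by auto
    ultimately show ?thesis unfolding Fp_def by (meson add_mono norm_triangle_le)
  qed
  have cF: "continuous_on {0<..t} (Fp g w x)"
  proof -
    have c1: "continuous_on {0<..t} (\<lambda>s. g (x s))"
      by (rule continuous_on_compose2[OF cg]) (auto intro: continuous_on_subset[OF cx])
    have c2: "continuous_on {0<..t} (\<lambda>s. integral {0..s} (\<lambda>u. w (x s - x u)))"
      by (rule continuous_on_subset[OF inner_cont[OF cw cx t]]) auto
    have c3: "continuous_on {0<..t} (\<lambda>s. 1 / s)"
      by (auto intro!: continuous_intros)
    show ?thesis unfolding Fp_def by (intro continuous_on_add continuous_on_scaleR c1 c2 c3)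
  qed
  have neg: "negligible (({0<..t} - {0..t}) \<union> ({0..t} - {0<..t}))"
    by (rule negligible_subset[of "{0}"]) auto
  have "Fp g w x integrable_on {0<..t}"
  proof (rule measurable_bounded_by_integrable_imp_integrable)
    show "Fp g w x \<in> borel_measurable (lebesgue_on {0<..t})"
      by (rule continuous_imp_measurable_on_sets_lebesgue[OF cF]) auto
    have "(\<lambda>s. Bg + Bw) integrable_on {0..t}" by (rule integrable_continuous_interval) (rule continuous_on_const)
    then show "(\<lambda>s. Bg + Bw) integrable_on {0<..t}"
      using integrable_spike_set_eq[OF neg] by blast
  next
    show "\<And>s. s \<in> {0<..t} \<Longrightarrow> norm (Fp g w x s) \<le> Bg + Bw" by (rule bnd)
  next
    show "{0<..t} \<in> sets lebesgue" by simp
  qed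
  then show ?thesis using integrable_spike_set_eq[OF neg] by blast
qed

lemma lipschitz_ball:
  fixes g :: "real^'n \<Rightarrow> real^'n" and H :: "real^'n \<Rightarrow> real^'n^'n" and P :: "real poly"
  assumes d: "\<And>x. (g has_derivative (\<lambda>h. H x *v h)) (at x)"
    and b: "\<And>x. onorm (\<lambda>h. H x *v h) \<le> poly P (norm x)"
  shows "\<exists>L\<ge>0. \<forall>y z. norm y \<le> R \<longrightarrow> norm z \<le> R \<longrightarrow> norm (g y - g z) \<le> L * norm (y - z)"
proof -
  have cp: "continuous_on {0..R} (\<lambda>r. poly P r)" by (rule continuous_on_poly[OF continuous_on_id])
  obtain B where B: "\<And>r. r \<in> {0..R} \<Longrightarrow> norm (poly P r) \<le> B"
    using bound_on_compact[OF cp compact_Icc] by blast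
  show ?thesis
  proof (intro exI[of _ "max 0 B"] conjI allI impI)
    fix y z :: "real^'n" assume y: "norm y \<le> R" and z: "norm z \<le> R"
    show "norm (g y - g z) \<le> max 0 B * norm (y - z)"
    proof (rule differentiable_bound[of "cball 0 R"])
      show "convex (cball (0::real^'n) R)" by simp
      show "(g has_derivative (\<lambda>h. H x *v h)) (at x within cball 0 R)" for x
        using d has_derivative_at_withinI by blast
      fix x :: "real^'n" assume x: "x \<in> cball 0 R"
      have "onorm (\<lambda>h. H x *v h) \<le> poly P (norm x)" by (rule b)
      also have "\<dots> \<le> norm (poly P (norm x))" by simp
      also have "\<dots> \<le> B" using x by (intro B) auto
      finally show "onorm (\<lambda>h. H x *v h) \<le> max 0 B" by simp
    qed (use y z in auto)
  qed simp
qed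

lemma bootstrap:
  fixes f :: "real \<Rightarrow> real"
  assumes cf: "continuous_on {0..T} f" and f0: "f 0 \<le> c" and c1: "c < 1" and T: "T \<ge> 0"
    and H: "\<And>t. t \<in> {0..T} \<Longrightarrow> \<forall>s\<in>{0..t}. f s \<le> 1 \<Longrightarrow> \<forall>s\<in>{0..t}. f s \<le> c"
  shows "\<forall>t\<in>{0..T}. f t \<le> c"
proof (cases "{t\<in>{0..T}. 1 \<le> f t} = {}")
  case True
  then have "\<forall>s\<in>{0..T}. f s \<le> 1" by force
  then show ?thesis using H[of T] T by auto
next
  case False
  define S where "S = {t\<in>{0..T}. 1 \<le> f t}"
  have S_eq: "S = {0..T} \<inter> f -` {1..}" unfolding S_def by auto
  have clS: "closed S" unfolding S_eq by (rule continuous_closed_preimage[OF cf]) auto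
  have neS: "S \<noteq> {}" using False unfolding S_def by simp
  have bS: "bdd_below S" unfolding S_def by (rule bdd_belowI[of _ 0]) auto
  define t1 where "t1 = Inf S"
  have t1S: "t1 \<in> S" unfolding t1_def by (rule closed_contains_Inf[OF neS bS clS])
  have low: "t1 \<le> u" if "u \<in> S" for u unfolding t1_def by (rule cInf_lower[OF that bS])
  have t1T: "t1 \<in> {0..T}" using t1S unfolding S_def by auto
  have ft1: "f t1 \<ge> 1" using t1S unfolding S_def by auto
  have t1pos: "t1 > 0"
  proof (rule ccontr)
    assume "\<not> t1 > 0" then have "t1 = 0" using t1T by auto
    then show False using ft1 f0 c1 by auto
  qed
  have before: "f s \<le> c" if s: "s \<in> {0..<t1}" for s
  proof -
    have sT: "s \<in> {0..T}" using s t1T by auto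
    have "\<forall>u\<in>{0..s}. f u \<le> 1"
    proof
      fix u assume u: "u \<in> {0..s}"
      show "f u \<le> 1"
      proof (rule ccontr)
        assume "\<not> f u \<le> 1"
        then have "u \<in> S" unfolding S_def using u sT by auto
        then have "t1 \<le> u" by (rule low)
        then show False using u s by auto
      qed
    qed
    then show ?thesis using H[OF sT] s by auto
  qed
  define Q where "Q = {0..T} \<inter> f -` {..c}"
  have clQ: "closed Q" unfolding Q_def by (rule continuous_closed_preimage[OF cf]) auto
  have "{0..<t1} \<subseteq> Q" unfolding Q_def using before t1T by auto
  then have "closure {0..<t1} \<subseteq> Q" using clQ by (rule closure_minimal)
  then have "t1 \<in> Q" using t1pos by auto
  then show ?thesis using ft1 c1 unfolding Q_def by auto
qed

lemma det_estimate:
  fixes g w :: "real^'n \<Rightarrow> real^'n" and x \<psi> b :: "real \<Rightarrow> real^'n" and x0 :: "real^'n"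
  assumes cg: "continuous_on UNIV g" and cw: "continuous_on UNIV w"
    and Lg: "\<forall>y z. norm y \<le> R0+1 \<longrightarrow> norm z \<le> R0+1 \<longrightarrow> norm (g y - g z) \<le> L * norm (y - z)"
    and Lw: "\<forall>y z. norm y \<le> 2*R0+2 \<longrightarrow> norm z \<le> 2*R0+2 \<longrightarrow> norm (w y - w z) \<le> L * norm (y - z)"
    and L0: "L \<ge> 0"
    and cpsi: "continuous_on {0..} \<psi>" and psiR: "\<forall>t\<in>{0..T}. norm (\<psi> t) \<le> R0"
    and psieq: "\<forall>t\<ge>0. \<psi> t = x0 - integral {0..t} (Fp g w \<psi>)"
    and cx: "continuous_on {0..} x" and xeq: "\<forall>t\<ge>0. x t = x0 + b t - integral {0..t} (Fp g w x)"
    and bd: "\<forall>t\<in>{0..T}. norm (b t) \<le> \<delta>"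
    and K: "K > 0" "6 * L * T \<le> real K" and T: "T > 0"
    and small: "6^K * \<delta> < 1"
  shows "\<forall>t\<in>{0..T}. norm (x t - \<psi> t) \<le> 6^K * \<delta>"
proof -
  define D where "D t = x t - \<psi> t" for t
  have incr: "D t = D s + (b t - b s) - integral {s..t} (\<lambda>r. Fp g w x r - Fp g w \<psi> r)"
    if st: "0 \<le> s" "s \<le> t" for s t
  proof -
    have ix: "Fp g w x integrable_on {0..t}" using Fp_integrable[OF cg cw cx] st by auto
    have ip: "Fp g w \<psi> integrable_on {0..t}" using Fp_integrable[OF cg cw cpsi] st by auto
    have ix2: "Fp g w x integrable_on {s..t}" by (rule integrable_on_subinterval[OF ix]) (use st in auto)
    have ip2: "Fp g w \<psi> integrable_on {s..t}" by (rule integrable_on_subinterval[OF ip]) (use st in auto)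
    have ex: "integral {0..t} (Fp g w x) = integral {0..s} (Fp g w x) + integral {s..t} (Fp g w x)"
      using Henstock_Kurzweil_Integration.integral_combine[OF st ix] by simp
    have ep: "integral {0..t} (Fp g w \<psi>) = integral {0..s} (Fp g w \<psi>) + integral {s..t} (Fp g w \<psi>)"
      using Henstock_Kurzweil_Integration.integral_combine[OF st ip] by simp
    have "integral {s..t} (\<lambda>r. Fp g w x r - Fp g w \<psi> r) = integral {s..t} (Fp g w x) - integral {s..t} (Fp g w \<psi>)"
      by (rule integral_diff[OF ix2 ip2])
    moreover have "x t = x0 + b t - (integral {0..s} (Fp g w x) + integral {s..t} (Fp g w x))" "x s = x0 + b s - integral {0..s} (Fp g w x)"
      "\<psi> t = x0 - (integral {0..s} (Fp g w \<psi>) + integral {s..t} (Fp g w \<psi>))" "\<psi> s = x0 - integral {0..s} (Fp g w \<psi>)"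
      using xeq psieq st ex ep by auto
    ultimately show ?thesis unfolding D_def
      by (simp only:) (simp add: algebra_simps)
  qed
  have D0: "D 0 = b 0" unfolding D_def using xeq psieq by simp
  have \<delta>0: "\<delta> \<ge> 0" using bd T by (metis atLeastAtMost_iff norm_ge_zero order.trans order_less_imp_le order_refl)
  have pw: "norm (Fp g w x r - Fp g w \<psi> r) \<le> 3 * L * N"
    if r: "r \<in> {0..T}" and N1: "N \<le> 1" and DN: "\<forall>u\<in>{0..r}. norm (D u) \<le> N" for r N
  proof -
    have N0: "N \<ge> 0" using DN r by (meson atLeastAtMost_iff norm_ge_zero order.trans order_refl)
    have pu: "norm (\<psi> u) \<le> R0" if "u \<in> {0..r}" for u using psiR r that by auto
    have xu: "norm (x u) \<le> R0 + 1" if u: "u \<in> {0..r}" for u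
    proof -
      have "x u = \<psi> u + D u" unfolding D_def by simp
      then have "norm (x u) \<le> norm (\<psi> u) + norm (D u)" by (metis norm_triangle_ineq)
      then show ?thesis using pu[OF u] DN u N1 by force
    qed
    have rr: "r \<in> {0..r}" using r by auto
    have t1: "norm (g (x r) - g (\<psi> r)) \<le> L * N"
    proof -
      have "norm (g (x r) - g (\<psi> r)) \<le> L * norm (x r - \<psi> r)"
        using Lg xu[OF rr] pu[OF rr] by auto
      also have "\<dots> \<le> L * N" using DN rr L0 unfolding D_def by (auto intro: mult_left_mono)
      finally show ?thesis .
    qed
    have cix: "continuous_on {0..r} (\<lambda>u. w (x r - x u))"
      by (rule continuous_on_compose2[OF cw]) (use r in \<open>auto intro!: continuous_intros continuous_on_subset[OF cx]\<close>)
    have cip: "continuous_on {0..r} (\<lambda>u. w (\<psi> r - \<psi> u))"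
      by (rule continuous_on_compose2[OF cw]) (use r in \<open>auto intro!: continuous_intros continuous_on_subset[OF cpsi]\<close>)
    have "integral {0..r} (\<lambda>u. w (x r - x u)) - integral {0..r} (\<lambda>u. w (\<psi> r - \<psi> u))
        = integral {0..r} (\<lambda>u. w (x r - x u) - w (\<psi> r - \<psi> u))"
      by (rule integral_diff[symmetric]) (auto intro: integrable_continuous_interval cix cip)
    also have "norm \<dots> \<le> (2 * L * N) * (r - 0)"
    proof (rule integral_bound)
      show "continuous_on {0..r} (\<lambda>u. w (x r - x u) - w (\<psi> r - \<psi> u))"
        by (intro continuous_on_diff cix cip)
      fix u assume u: "u \<in> {0..r}"
      have a1: "norm (x r - x u) \<le> 2*R0+2"
        using norm_triangle_ineq4[of "x r" "x u"] xu[OF rr] xu[OF u] by linarith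
      have a2: "norm (\<psi> r - \<psi> u) \<le> 2*R0+2"
        using norm_triangle_ineq4[of "\<psi> r" "\<psi> u"] pu[OF rr] pu[OF u] by linarith
      have "norm (w (x r - x u) - w (\<psi> r - \<psi> u)) \<le> L * norm ((x r - x u) - (\<psi> r - \<psi> u))"
        using Lw a1 a2 by blast
      also have "(x r - x u) - (\<psi> r - \<psi> u) = D r - D u" unfolding D_def by (simp add: algebra_simps)
      also have "norm (D r - D u) \<le> norm (D r) + norm (D u)" by (rule norm_triangle_ineq4)
      also have "\<dots> \<le> 2 * N" using bspec[OF DN u] bspec[OF DN rr] by linarith
      finally show "norm (w (x r - x u) - w (\<psi> r - \<psi> u)) \<le> 2 * L * N"
        using L0 by (simp add: mult_left_mono)
    qed (use r in auto)
    finally have t2': "norm (integral {0..r} (\<lambda>u. w (x r - x u)) - integral {0..r} (\<lambda>u. w (\<psi> r - \<psi> u))) \<le> 2 * L * N * r"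
      by simp
    have t2: "norm ((1 / r) *\<^sub>R integral {0..r} (\<lambda>u. w (x r - x u)) - (1 / r) *\<^sub>R integral {0..r} (\<lambda>u. w (\<psi> r - \<psi> u))) \<le> 2 * L * N"
    proof (cases "r = 0")
      case True then show ?thesis using L0 N0 by simp
    next
      case False
      then have rp: "r > 0" using r by auto
      have "norm ((1 / r) *\<^sub>R integral {0..r} (\<lambda>u. w (x r - x u)) - (1 / r) *\<^sub>R integral {0..r} (\<lambda>u. w (\<psi> r - \<psi> u)))
          = (1 / r) * norm (integral {0..r} (\<lambda>u. w (x r - x u)) - integral {0..r} (\<lambda>u. w (\<psi> r - \<psi> u)))"
        using rp by (simp add: scaleR_diff_right[symmetric])
      also have "\<dots> \<le> (1 / r) * (2 * L * N * r)" using t2' rp by (intro mult_left_mono) auto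
      also have "\<dots> = 2 * L * N" using rp by simp
      finally show ?thesis .
    qed
    have "Fp g w x r - Fp g w \<psi> r = (g (x r) - g (\<psi> r)) + ((1 / r) *\<^sub>R integral {0..r} (\<lambda>u. w (x r - x u)) - (1 / r) *\<^sub>R integral {0..r} (\<lambda>u. w (\<psi> r - \<psi> u)))"
      unfolding Fp_def by (simp add: algebra_simps)
    then have "norm (Fp g w x r - Fp g w \<psi> r) \<le> L * N + 2 * L * N"
      using t1 t2 by (metis add_mono norm_triangle_le)
    then show ?thesis by simp
  qed
  define h where "h = T / real K"
  have h0: "h > 0" unfolding h_def using T K by auto
  have Kh: "real K * h = T" unfolding h_def using K by auto
  have Lh: "3 * L * h \<le> 1 / 2"
  proof -
    have "6 * L * h = (6 * L * T) / real K" unfolding h_def by simp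
    also have "\<dots> \<le> 1" using K by (simp add: divide_le_eq)
    finally show ?thesis by simp
  qed
  have cD: "continuous_on {0..} D" unfolding D_def by (intro continuous_on_diff cx cpsi)
  have step: "\<forall>s\<in>{0..t}. s \<le> real k * h \<longrightarrow> norm (D s) \<le> 6^k * \<delta>"
    if t: "t \<in> {0..T}" and P: "\<forall>s\<in>{0..t}. norm (D s) \<le> 1" for t k
  proof (induction k)
    case 0
    show ?case
    proof (intro ballI impI)
      fix s assume "s \<in> {0..t}" "s \<le> real 0 * h"
      then have "s = 0" by auto
      then show "norm (D s) \<le> 6^0 * \<delta>" using D0 bd T by auto
    qed
  next
    case (Suc k)
    define s' where "s' = min t (real (Suc k) * h)"
    have s'0: "s' \<ge> 0" unfolding s'_def using t h0 by auto
    have cDs: "continuous_on {0..s'} (\<lambda>s. norm (D s))"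
      by (intro continuous_on_norm continuous_on_subset[OF cD]) auto
    obtain s0 where s0: "s0 \<in> {0..s'}" and mx: "\<And>s. s \<in> {0..s'} \<Longrightarrow> norm (D s) \<le> norm (D s0)"
      using continuous_attains_sup[OF compact_Icc _ cDs] s'0 by auto
    define N where "N = norm (D s0)"
    have N1: "N \<le> 1" unfolding N_def using P s0 unfolding s'_def by auto
    have N0: "N \<ge> 0" unfolding N_def by simp
    have pk: "(6::real)^k \<ge> 1" by simp
    have NB: "N \<le> 6^(Suc k) * \<delta>"
    proof (cases "s0 \<le> real k * h")
      case True
      then have "N \<le> 6^k * \<delta>" using Suc s0 unfolding N_def s'_def by auto
      also have "\<dots> \<le> 6^(Suc k) * \<delta>" using \<delta>0 by (simp add: mult_right_mono)
      finally show ?thesis .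
    next
      case False
      define a where "a = real k * h"
      have a0: "0 \<le> a" unfolding a_def using h0 by simp
      have as0: "a \<le> s0" using False unfolding a_def by simp
      have s0t: "s0 \<le> t" using s0 unfolding s'_def by auto
      have s0h: "s0 - a \<le> h" using s0 unfolding s'_def a_def by (auto simp: algebra_simps)
      have tT: "t \<le> T" using t by simp
      have inc: "D s0 = D a + (b s0 - b a) - integral {a..s0} (\<lambda>r. Fp g w x r - Fp g w \<psi> r)"
        by (rule incr[OF a0 as0])
      have ix: "Fp g w x integrable_on {a..s0}"
        by (rule integrable_on_subinterval[OF Fp_integrable[OF cg cw cx, of s0]]) (use a0 as0 in auto)
      have ip: "Fp g w \<psi> integrable_on {a..s0}"
        by (rule integrable_on_subinterval[OF Fp_integrable[OF cg cw cpsi, of s0]]) (use a0 as0 in auto)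
      have "norm (integral {a..s0} (\<lambda>r. Fp g w x r - Fp g w \<psi> r)) \<le> integral {a..s0} (\<lambda>r. 3 * L * N)"
      proof (rule integral_norm_bound_integral)
        show "(\<lambda>r. Fp g w x r - Fp g w \<psi> r) integrable_on {a..s0}" by (rule integrable_diff[OF ix ip])
        show "(\<lambda>r. 3 * L * N) integrable_on {a..s0}" by (rule integrable_continuous_interval) (rule continuous_on_const)
        fix r assume r: "r \<in> {a..s0}"
        show "norm (Fp g w x r - Fp g w \<psi> r) \<le> 3 * L * N"
        proof (rule pw)
          show "r \<in> {0..T}" using r a0 s0t tT by auto
          show "N \<le> 1" by (rule N1)
          show "\<forall>u\<in>{0..r}. norm (D u) \<le> N" unfolding N_def using r s0 by (auto intro!: mx)
        qed
      qed
      also have "\<dots> = (s0 - a) * (3 * L * N)" using as0 by simp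
      also have "\<dots> \<le> h * (3 * L * N)" using s0h L0 N0 by (intro mult_right_mono) auto
      also have "\<dots> = (3 * L * h) * N" by (simp add: algebra_simps)
      also have "\<dots> \<le> (1 / 2) * N" by (rule mult_right_mono[OF Lh N0])
      finally have iN: "norm (integral {a..s0} (\<lambda>r. Fp g w x r - Fp g w \<psi> r)) \<le> N / 2" by simp
      have bN: "norm (b s0 - b a) \<le> 2 * \<delta>"
      proof -
        have "norm (b s0) \<le> \<delta>" "norm (b a) \<le> \<delta>" using bd a0 as0 s0t tT by auto
        then show ?thesis using norm_triangle_ineq4[of "b s0" "b a"] by linarith
      qed
      have aN: "norm (D a) \<le> 6^k * \<delta>" using Suc a0 as0 s0t unfolding a_def by auto
      have "N \<le> norm (D a) + norm (b s0 - b a) + norm (integral {a..s0} (\<lambda>r. Fp g w x r - Fp g w \<psi> r))"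
      proof -
        have "norm (D a + (b s0 - b a) - integral {a..s0} (\<lambda>r. Fp g w x r - Fp g w \<psi> r))
           \<le> norm (D a + (b s0 - b a)) + norm (integral {a..s0} (\<lambda>r. Fp g w x r - Fp g w \<psi> r))"
          by (rule norm_triangle_ineq4)
        moreover have "norm (D a + (b s0 - b a)) \<le> norm (D a) + norm (b s0 - b a)" by (rule norm_triangle_ineq)
        ultimately show ?thesis unfolding N_def inc by linarith
      qed
      then have "N \<le> 6^k * \<delta> + 2 * \<delta> + N / 2" using iN bN aN by linarith
      then have "N \<le> 2 * 6^k * \<delta> + 4 * \<delta>" by linarith
      also have "\<dots> \<le> 6^(Suc k) * \<delta>"
      proof -
        have "1 * \<delta> \<le> 6^k * \<delta>" by (rule mult_right_mono[OF pk \<delta>0])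
        then show ?thesis by (simp add: mult.commute)
      qed
      finally show ?thesis .
    qed
    show ?case
    proof (intro ballI impI)
      fix s assume "s \<in> {0..t}" "s \<le> real (Suc k) * h"
      then have "s \<in> {0..s'}" unfolding s'_def by auto
      then have "norm (D s) \<le> N" unfolding N_def by (rule mx)
      then show "norm (D s) \<le> 6^(Suc k) * \<delta>" using NB by linarith
    qed
  qed
  have "\<forall>t\<in>{0..T}. norm (D t) \<le> 6^K * \<delta>"
  proof (rule bootstrap)
    show "continuous_on {0..T} (\<lambda>t. norm (D t))" by (intro continuous_on_norm continuous_on_subset[OF cD]) auto
    show "norm (D 0) \<le> 6^K * \<delta>"
    proof -
      have "norm (D 0) \<le> \<delta>" using D0 bd T by auto
      also have "\<dots> \<le> 6^K * \<delta>" using mult_right_mono[OF _ \<delta>0, of 1 "6^K"] by simp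
      finally show ?thesis .
    qed
    fix t assume t: "t \<in> {0..T}" and P: "\<forall>s\<in>{0..t}. norm (D s) \<le> 1"
    show "\<forall>s\<in>{0..t}. norm (D s) \<le> 6^K * \<delta>"
      using step[OF t P, of K] Kh t by auto
  qed (use small T in auto)
  then show ?thesis unfolding D_def .
qed

lemma cont_rat_bound:
  fixes f :: "real \<Rightarrow> 'b::real_normed_vector"
  assumes cf: "continuous_on {0..} f"
    and bq: "\<forall>q\<in>{q\<in>\<rat>. 0 \<le> q \<and> q \<le> T}. norm (f q) \<le> c"
  shows "\<forall>t\<in>{0..T}. norm (f t) \<le> c"
proof
  fix t assume t: "t \<in> {0..T}"
  show "norm (f t) \<le> c"
  proof (rule ccontr)
    assume nc: "\<not> norm (f t) \<le> c"
    have "t \<in> {0..}" using t by auto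
    then obtain d where d: "d > 0" and dd: "\<And>x'. x' \<in> {0..} \<Longrightarrow> dist x' t < d \<Longrightarrow> dist (f x') (f t) < norm (f t) - c"
      using cf nc unfolding continuous_on_iff by (metis diff_gt_0_iff_gt not_le)
    obtain q where q: "q \<in> \<rat>" "0 \<le> q" "q \<le> T" "dist q t < d"
    proof (cases "t = 0")
      case True then show ?thesis using that[of 0] d t by auto
    next
      case False
      then have "max 0 (t - d) < t" using t d by auto
      then obtain r where "r \<in> \<rat>" "max 0 (t - d) < r" "r < t" using Rats_dense_in_real by blast
      then show ?thesis using that[of r] t by (auto simp: dist_real_def)
    qed
    have "dist (f q) (f t) < norm (f t) - c" using dd q by auto
    moreover have "norm (f q) \<le> c" using bq q by auto
    moreover have "norm (f t) \<le> norm (f q) + dist (f q) (f t)"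
      by (metis dist_commute dist_norm norm_triangle_sub add.commute)
    ultimately show False by linarith
  qed
qed

lemma outer_prob_le:
  assumes "N \<in> sets M" "A \<inter> space M \<subseteq> N"
  shows "outer_prob M A \<le> measure M N"
  unfolding outer_prob_def
  by (rule cInf_lower) (use assms in \<open>auto intro!: bdd_belowI[of _ 0]\<close>)

lemma outer_prob_nonneg: "0 \<le> outer_prob M A"
  unfolding outer_prob_def
  by (rule cInf_greatest) auto

lemma sip_iff:
  "self_interacting_path g w x0 b x \<longleftrightarrow>
     continuous_on {0..} x \<and> (\<forall>t\<ge>0. x t = x0 + b t - integral {0..t} (Fp g w x))"
proof -
  have "Fp g w x = (\<lambda>s. g (x s) + (1 / s) *\<^sub>R integral {0..s} (\<lambda>u. w (x s - x u)))"
    by (rule ext) (simp add: Fp_def)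
  then show ?thesis unfolding self_interacting_path_def by simp
qed

theorem proposition3p1:
  fixes V W :: "real^'n \<Rightarrow> real"
    and gV gW :: "real^'n \<Rightarrow> real^'n"
    and HV HW :: "real^'n \<Rightarrow> real^'n^'n"
    and x0 :: "real^'n"
    and M :: "'a measure"
    and B :: "real \<Rightarrow> 'a \<Rightarrow> real^'n"
    and X :: "real \<Rightarrow> real \<Rightarrow> 'a \<Rightarrow> real^'n"
    and \<psi> :: "real \<Rightarrow> real^'n"
    and \<xi> T :: real
  assumes dV: "\<And>x. (V has_derivative (\<lambda>h. gV x \<bullet> h)) (at x)"
    and dgV: "\<And>x. (gV has_derivative (\<lambda>h. HV x *v h)) (at x)"
    and contHV: "continuous_on UNIV HV"
    and dW: "\<And>x. (W has_derivative (\<lambda>h. gW x \<bullet> h)) (at x)"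
    and dgW: "\<And>x. (gW has_derivative (\<lambda>h. HW x *v h)) (at x)"
    and contHW: "continuous_on UNIV HW"
    and V_nonneg: "\<And>x. V x \<ge> 0"
    and W_nonneg: "\<And>x. W x \<ge> 0"
    and poly_bound: "\<exists>P :: real poly. \<forall>x. poly P (norm x) \<ge> 1 \<and>
        \<bar>W x\<bar> + norm (gW x) + onorm (\<lambda>h. HW x *v h) + \<bar>V x\<bar> + norm (gV x)
          + onorm (\<lambda>h. HV x *v h) \<le> poly P (norm x)"
    and V_convex: "\<exists>\<rho>>0. \<forall>x h. h \<bullet> (HV x *v h) \<ge> \<rho> * (norm h)\<^sup>2"
    and W_convex: "\<exists>\<alpha>>0. \<forall>x h. h \<bullet> (HW x *v h) \<ge> \<alpha> * (norm h)\<^sup>2"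
    and V_lap: "\<exists>a. \<forall>x. (\<Sum>i\<in>UNIV. HV x $ i $ i) \<le> a * V x"
    and V_grad_inf: "filterlim (\<lambda>x. (norm (gV x))\<^sup>2 / V x) at_top at_infinity"
    and V_min: "\<exists>m. \<forall>x. x \<noteq> m \<longrightarrow> V m < V x"
    and W_radial: "\<exists>G :: real \<Rightarrow> real. \<forall>x. W x = G (norm x)"
    and BM: "std_brownian_motion M B"
    and X_meas: "\<And>\<sigma> t. \<sigma> > 0 \<Longrightarrow> t \<ge> 0 \<Longrightarrow> X \<sigma> t \<in> borel_measurable M"
    and X_sol: "\<And>\<sigma>. \<sigma> > 0 \<Longrightarrow>
        AE \<omega> in M. self_interacting_path gV gW x0 (\<lambda>t. \<sigma> *\<^sub>R B t \<omega>) (\<lambda>t. X \<sigma> t \<omega>)"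
    and psi_sol: "self_interacting_path gV gW x0 (\<lambda>t. 0) \<psi>"
    and xi_pos: "\<xi> > 0"
    and T_pos: "T > 0"
  shows "((\<lambda>\<sigma>. outer_prob M
            {\<omega> \<in> space M. (SUP t\<in>{0..T}. (norm (X \<sigma> t \<omega> - \<psi> t))\<^sup>2) > \<xi>})
          \<longlongrightarrow> 0) (at_right 0)"
proof -
  have cgV: "continuous_on UNIV gV"
    by (rule has_derivative_continuous_on[of UNIV gV "\<lambda>x h. HV x *v h"]) (use dgV in auto)
  have cgW: "continuous_on UNIV gW"
    by (rule has_derivative_continuous_on[of UNIV gW "\<lambda>x h. HW x *v h"]) (use dgW in auto)
  obtain P :: "real poly" where P: "\<And>x. poly P (norm x) \<ge> 1 \<and>
        \<bar>W x\<bar> + norm (gW x) + onorm (\<lambda>h. HW x *v h) + \<bar>V x\<bar> + norm (gV x)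
          + onorm (\<lambda>h. HV x *v h) \<le> poly P (norm x)"
    using poly_bound by blast
  have onV: "onorm (\<lambda>h. HV x *v h) \<le> poly P (norm x)" for x
  proof -
    have "onorm (\<lambda>h. HW x *v h) \<ge> 0" by (rule onorm_pos_le) (rule matrix_vector_mul_bounded_linear)
    then show ?thesis using P[of x] abs_ge_zero[of "W x"] abs_ge_zero[of "V x"] norm_ge_zero[of "gW x"] norm_ge_zero[of "gV x"] by linarith
  qed
  have onW: "onorm (\<lambda>h. HW x *v h) \<le> poly P (norm x)" for x
  proof -
    have "onorm (\<lambda>h. HV x *v h) \<ge> 0" by (rule onorm_pos_le) (rule matrix_vector_mul_bounded_linear)
    then show ?thesis using P[of x] abs_ge_zero[of "W x"] abs_ge_zero[of "V x"] norm_ge_zero[of "gW x"] norm_ge_zero[of "gV x"] by linarith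
  qed
  have cpsi: "continuous_on {0..} \<psi>" and psieq: "\<forall>t\<ge>0. \<psi> t = x0 - integral {0..t} (Fp gV gW \<psi>)"
    using psi_sol unfolding sip_iff by auto
  obtain R0 where R0: "\<forall>t\<in>{0..T}. norm (\<psi> t) \<le> R0"
    using bound_on_compact[OF continuous_on_subset[OF cpsi] compact_Icc, of 0 T] by auto
  obtain L1 where L1: "L1 \<ge> 0" "\<forall>y z. norm y \<le> R0+1 \<longrightarrow> norm z \<le> R0+1 \<longrightarrow> norm (gV y - gV z) \<le> L1 * norm (y - z)"
    using lipschitz_ball[OF dgV onV] by blast
  obtain L2 where L2: "L2 \<ge> 0" "\<forall>y z. norm y \<le> 2*R0+2 \<longrightarrow> norm z \<le> 2*R0+2 \<longrightarrow> norm (gW y - gW z) \<le> L2 * norm (y - z)"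
    using lipschitz_ball[OF dgW onW] by blast
  define L where "L = max L1 L2"
  have L0: "L \<ge> 0" unfolding L_def using L1 by auto
  have Lg: "\<forall>y z. norm y \<le> R0+1 \<longrightarrow> norm z \<le> R0+1 \<longrightarrow> norm (gV y - gV z) \<le> L * norm (y - z)"
  proof (intro allI impI)
    fix y z :: "real^'n" assume "norm y \<le> R0+1" "norm z \<le> R0+1"
    then have "norm (gV y - gV z) \<le> L1 * norm (y - z)" using L1 by blast
    also have "\<dots> \<le> L * norm (y - z)" unfolding L_def by (intro mult_right_mono) auto
    finally show "norm (gV y - gV z) \<le> L * norm (y - z)" .
  qed
  have Lw: "\<forall>y z. norm y \<le> 2*R0+2 \<longrightarrow> norm z \<le> 2*R0+2 \<longrightarrow> norm (gW y - gW z) \<le> L * norm (y - z)"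
  proof (intro allI impI)
    fix y z :: "real^'n" assume "norm y \<le> 2*R0+2" "norm z \<le> 2*R0+2"
    then have "norm (gW y - gW z) \<le> L2 * norm (y - z)" using L2 by blast
    also have "\<dots> \<le> L * norm (y - z)" unfolding L_def by (intro mult_right_mono) auto
    finally show "norm (gW y - gW z) \<le> L * norm (y - z)" .
  qed
  define K where "K = nat \<lceil>6 * L * T\<rceil> + 1"
  have K0: "K > 0" unfolding K_def by simp
  have KL: "6 * L * T \<le> real K" unfolding K_def by linarith
  define C :: real where "C = 6^K"
  have C1: "C \<ge> 1" unfolding C_def by simp
  define \<delta> where "\<delta> = min (1 / (2 * C)) (sqrt \<xi> / (2 * C))"
  have \<delta>0: "\<delta> > 0" unfolding \<delta>_def using C1 xi_pos by auto
  have C\<delta>1: "C * \<delta> \<le> 1 / 2"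
  proof -
    have "C * \<delta> \<le> C * (1 / (2 * C))" unfolding \<delta>_def using C1 by (intro mult_left_mono) auto
    then show ?thesis using C1 by simp
  qed
  have C\<delta>2: "C * \<delta> \<le> sqrt \<xi> / 2"
  proof -
    have "C * \<delta> \<le> C * (sqrt \<xi> / (2 * C))" unfolding \<delta>_def using C1 by (intro mult_left_mono) auto
    then show ?thesis using C1 by simp
  qed
  have C\<delta>sq: "(C * \<delta>)^2 < \<xi>"
  proof -
    have "(C * \<delta>)^2 \<le> (sqrt \<xi> / 2)^2" using C\<delta>2 C1 \<delta>0 by (intro power_mono) auto
    also have "\<dots> = \<xi> / 4" using xi_pos by (simp add: power_divide)
    finally show ?thesis using xi_pos by linarith
  qed
  have DET: "(SUP t\<in>{0..T}. (norm (x t - \<psi> t))\<^sup>2) < \<xi>"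
    if cx: "continuous_on {0..} x" and xeq: "\<forall>t\<ge>0. x t = x0 + b t - integral {0..t} (Fp gV gW x)"
      and bd: "\<forall>t\<in>{0..T}. norm (b t) \<le> \<delta>" for x b
  proof -
    have est: "\<forall>t\<in>{0..T}. norm (x t - \<psi> t) \<le> 6^K * \<delta>"
      by (rule det_estimate[OF cgV cgW Lg Lw L0 cpsi R0 psieq cx xeq bd K0 KL T_pos])
        (use C\<delta>1 in \<open>simp add: C_def\<close>)
    have "(SUP t\<in>{0..T}. (norm (x t - \<psi> t))\<^sup>2) \<le> (C * \<delta>)^2"
    proof (rule cSUP_least)
      show "{0..T} \<noteq> {}" using T_pos by simp
      fix t assume "t \<in> {0..T}"
      then have "norm (x t - \<psi> t) \<le> C * \<delta>" using est unfolding C_def by auto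
      then show "(norm (x t - \<psi> t))\<^sup>2 \<le> (C * \<delta>)^2" by (intro power_mono) auto
    qed
    then show ?thesis using C\<delta>sq by linarith
  qed
  have ps: "prob_space M" and Bmeas: "\<And>t. t \<ge> 0 \<Longrightarrow> B t \<in> borel_measurable M"
    and Bae: "AE \<omega> in M. B 0 \<omega> = 0 \<and> continuous_on {0..} (\<lambda>t. B t \<omega>)"
    using BM unfolding std_brownian_motion_def by auto
  interpret prob_space M by (rule ps)
  obtain NB where NB: "NB \<in> null_sets M" and NBc: "\<And>\<omega>. \<omega> \<in> space M - NB \<Longrightarrow> continuous_on {0..} (\<lambda>t. B t \<omega>)"
    using Bae by (rule AE_E3) blast
  define Qs where "Qs = {q\<in>\<rat>. 0 \<le> q \<and> q \<le> T}"
  have cQ: "countable Qs" unfolding Qs_def by (rule countable_subset[OF _ countable_rat]) auto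
  define Cn where "Cn n = (\<Union>q\<in>Qs. {\<omega>\<in>space M. real n < norm (B q \<omega>)})" for n :: nat
  have Cn_sets: "Cn n \<in> sets M" for n
    unfolding Cn_def
  proof (rule sets.countable_UN''[OF cQ])
    fix q assume "q \<in> Qs"
    then have "B q \<in> borel_measurable M" using Bmeas unfolding Qs_def by auto
    then show "{\<omega>\<in>space M. real n < norm (B q \<omega>)} \<in> sets M" by measurable
  qed
  have Cdec: "antimono Cn"
  proof (rule antimonoI)
    fix a b :: nat assume "a \<le> b"
    then show "Cn b \<le> Cn a" unfolding Cn_def by (auto intro: order_le_less_trans)
  qed
  have Cint: "(\<Inter>n. Cn n) \<subseteq> NB"
  proof
    fix \<omega> assume w: "\<omega> \<in> (\<Inter>n. Cn n)"
    then have ws: "\<omega> \<in> space M" unfolding Cn_def by auto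
    show "\<omega> \<in> NB"
    proof (rule ccontr)
      assume "\<omega> \<notin> NB"
      then have "continuous_on {0..} (\<lambda>t. B t \<omega>)" using NBc ws by auto
      then obtain Bd where Bd: "\<forall>t\<in>{0..T}. norm (B t \<omega>) \<le> Bd"
        using bound_on_compact[OF continuous_on_subset compact_Icc, of "{0..}" "\<lambda>t. B t \<omega>" 0 T] by auto
      have "\<omega> \<in> Cn (nat \<lceil>Bd\<rceil>)" using w by auto
      then obtain q where "q \<in> Qs" "real (nat \<lceil>Bd\<rceil>) < norm (B q \<omega>)" unfolding Cn_def by auto
      moreover have "norm (B q \<omega>) \<le> Bd" using Bd \<open>q \<in> Qs\<close> unfolding Qs_def by auto
      ultimately show False by linarith
    qed
  qed
  have "(\<lambda>n. measure M (Cn n)) \<longlonglongrightarrow> measure M (\<Inter>n. Cn n)"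
    by (rule finite_Lim_measure_decseq) (use Cn_sets Cdec in auto)
  moreover have "measure M (\<Inter>n. Cn n) = 0"
    by (rule measure_eq_0_null_sets, rule null_sets_subset[OF NB _ Cint]) (use Cn_sets in auto)
  ultimately have Clim: "(\<lambda>n. measure M (Cn n)) \<longlonglongrightarrow> 0" by simp
  show ?thesis
  proof (rule tendstoI)
    fix e :: real assume e: "e > 0"
    obtain n0 where n0: "\<And>n. n \<ge> n0 \<Longrightarrow> dist (measure M (Cn n)) 0 < e"
      using tendstoD[OF Clim e] unfolding eventually_sequentially by blast
    define n where "n = Suc n0"
    have nC: "measure M (Cn n) < e" using n0[of n] unfolding n_def by simp
    have npos: "real n > 0" unfolding n_def by simp
    have ev: "\<forall>\<^sub>F \<sigma> in at_right 0. \<sigma> \<in> {0<..<\<delta> / real n}"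
      by (rule eventually_at_right_real) (use \<delta>0 npos in simp)
    show "\<forall>\<^sub>F \<sigma> in at_right 0. dist (outer_prob M {\<omega> \<in> space M. (SUP t\<in>{0..T}. (norm (X \<sigma> t \<omega> - \<psi> t))\<^sup>2) > \<xi>}) 0 < e"
    proof (rule eventually_mono[OF ev])
      fix \<sigma> assume \<sigma>: "\<sigma> \<in> {0<..<\<delta> / real n}"
      then have \<sigma>0: "\<sigma> > 0" by simp
      have \<sigma>n: "\<sigma> * real n < \<delta>" using \<sigma> npos by (simp add: less_divide_eq)
      obtain Ns where Ns: "Ns \<in> null_sets M" and Nsx: "\<And>\<omega>. \<omega> \<in> space M - Ns \<Longrightarrow>
          self_interacting_path gV gW x0 (\<lambda>t. \<sigma> *\<^sub>R B t \<omega>) (\<lambda>t. X \<sigma> t \<omega>)"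
        using X_sol[OF \<sigma>0] by (rule AE_E3) blast
      define E where "E = {\<omega> \<in> space M. (SUP t\<in>{0..T}. (norm (X \<sigma> t \<omega> - \<psi> t))\<^sup>2) > \<xi>}"
      have sub: "E \<inter> space M \<subseteq> Cn n \<union> (Ns \<union> NB)"
      proof
        fix \<omega> assume w: "\<omega> \<in> E \<inter> space M"
        show "\<omega> \<in> Cn n \<union> (Ns \<union> NB)"
        proof (rule ccontr)
          assume nw: "\<omega> \<notin> Cn n \<union> (Ns \<union> NB)"
          have ws: "\<omega> \<in> space M" using w by auto
          have sip: "self_interacting_path gV gW x0 (\<lambda>t. \<sigma> *\<^sub>R B t \<omega>) (\<lambda>t. X \<sigma> t \<omega>)"
            using Nsx nw ws by auto
          have cB: "continuous_on {0..} (\<lambda>t. B t \<omega>)" using NBc nw ws by auto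
          have "\<forall>q\<in>Qs. norm (B q \<omega>) \<le> real n" using nw ws unfolding Cn_def by auto
          then have Bb: "\<forall>t\<in>{0..T}. norm (B t \<omega>) \<le> real n"
            using cont_rat_bound[OF cB] unfolding Qs_def by blast
          have bd: "\<forall>t\<in>{0..T}. norm (\<sigma> *\<^sub>R B t \<omega>) \<le> \<delta>"
          proof
            fix t assume "t \<in> {0..T}"
            then have "\<sigma> * norm (B t \<omega>) \<le> \<sigma> * real n" using Bb \<sigma>0 by (intro mult_left_mono) auto
            moreover have "norm (\<sigma> *\<^sub>R B t \<omega>) = \<sigma> * norm (B t \<omega>)" using \<sigma>0 by simp
            ultimately show "norm (\<sigma> *\<^sub>R B t \<omega>) \<le> \<delta>" using \<sigma>n by linarith
          qed
          have "(SUP t\<in>{0..T}. (norm (X \<sigma> t \<omega> - \<psi> t))\<^sup>2) < \<xi>"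
            using DET[of "\<lambda>t. X \<sigma> t \<omega>" "\<lambda>t. \<sigma> *\<^sub>R B t \<omega>"] sip bd unfolding sip_iff by blast
          then show False using w unfolding E_def by auto
        qed
      qed
      have "outer_prob M E \<le> measure M (Cn n \<union> (Ns \<union> NB))"
        by (rule outer_prob_le[OF _ sub]) (use Cn_sets Ns NB in auto)
      also have "\<dots> = measure M (Cn n)"
        by (rule measure_Un_null_set) (use Cn_sets Ns NB in auto)
      finally have "outer_prob M E < e" using nC by linarith
      then show "dist (outer_prob M {\<omega> \<in> space M. (SUP t\<in>{0..T}. (norm (X \<sigma> t \<omega> - \<psi> t))\<^sup>2) > \<xi>}) 0 < e"
        using outer_prob_nonneg[of M E] unfolding E_def by simp
    qed
  qed
qed

end
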